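(* Let $0<t_1<T$. Let $\sigma$ be a convex function on $\mathbb{R}^n$ and let $H(t,p)$ be a continuously differentiable function on $[t_1,T]\times\mathbb{R}^n$ satisfying conditions (A1) and (A2) on $[t_1,T]\times\mathbb{R}^n$ (with $a=t_1$, $b=T$). Then the function $$u(t,x)=\Big(\sigma^*+\int_{t_1}^t H(\tau,\cdot)\,d\tau\Big)^*(x)=\max_{q\in\mathbb{R}^n}\Big\{\langle x,q\rangle-\sigma^*(q)-\int_{t_1}^t H(\tau,q)\,d\tau\Big\}$$ is a viscosity solution of the Cauchy problem $u_t+H(t,D_xu)=0$ in $(t_1,T)\times\mathbb{R}^n$, $u(t_1,x)=\sigma(x)$, $x\in\mathbb{R}^n$.
   Context: For a function $f:\mathbb{R}^n\to\mathbb{R}\cup\{+\infty\}$, $f^*(y)=\sup_{q\in\mathbb{R}^n}\{\langle y,q\rangle-f(q)\}$ denotes its Fenchel conjugate. Conditions on a strip $[a,b]\times\mathbb{R}^n$: (A1) for every $(t_0,x_0)\in[a,b]\times\mathbb{R}^n$ there exist constants $r>0$, $N>0$ such that $\langle x,p\rangle-\sigma^*(p)-\int_a^t H(\tau,p)d\tau<\max_{|q|\le N}\{\langle x,q\rangle-\sigma^*(q)-\int_a^tH(\tau,q)d\tau\}$ whenever $(t,x)\in[a,b]\times\mathbb{R}^n$, $|t-t_0|+|x-x_0|<r$ and $|p|>N$. (A2) $H$ has one of the two forms: (a) $H(t,\cdot)$ is convex for all $t\in[a,b]$, or $H(t,\cdot)$ is concave for all $t\in[a,b]$; (b) $H(t,p)=g(t)h(p)+k(t)$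 for some functions $g,h,k$, where $g(t)$ does not change its sign on $[a,b]$. A viscosity solution of the Cauchy problem $u_t+H(t,D_xu)=0$ in $(a,b)\times\mathbb{R}^n$, $u(a,x)=g(x)$, is a continuous $u:[a,b]\times\mathbb{R}^n\to\mathbb{R}$ with $u(a,\cdot)=g$ such that for every $v\in C^1((a,b)\times\mathbb{R}^n)$: if $u-v$ has a local maximum at $(t_0,x_0)\in(a,b)\times\mathbb{R}^n$ then $v_t(t_0,x_0)+H(t_0,D_xv(t_0,x_0))\le0$, and if $u-v$ has a local minimum there then $v_t(t_0,x_0)+H(t_0,D_xv(t_0,x_0))\ge0$. *)

theory Defs
  imports "HOL-Analysis.Analysis"
begin

definition fconj :: "('a::real_inner \<Rightarrow> real) \<Rightarrow> 'a \<Rightarrow> ereal" where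
  "fconj f y = (SUP q. ereal (inner y q - f q))"

definition cond_A1 :: "(real^'n \<Rightarrow> real) \<Rightarrow> (real \<Rightarrow> real^'n \<Rightarrow> real) \<Rightarrow> real \<Rightarrow> real \<Rightarrow> bool" where
  "cond_A1 \<sigma> H a b \<longleftrightarrow>
    (\<forall>t0\<in>{a..b}. \<forall>x0::real^'n. \<exists>r>0. \<exists>N>0.
       \<forall>t\<in>{a..b}. \<forall>x p. \<bar>t - t0\<bar> + norm (x - x0) < r \<and> norm p > N \<longrightarrow>
          ereal (inner x p) - fconj \<sigma> p - ereal (integral {a..t} (\<lambda>\<tau>. H \<tau> p))
          < (SUP q\<in>cball 0 N. ereal (inner x q) - fconj \<sigma> q - ereal (integral {a..t} (\<lambda>\<tau>. H \<tau> q))))"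

definition cond_A2 :: "(real \<Rightarrow> real^'n \<Rightarrow> real) \<Rightarrow> real \<Rightarrow> real \<Rightarrow> bool" where
  "cond_A2 H a b \<longleftrightarrow>
    ((\<forall>t\<in>{a..b}. convex_on UNIV (H t)) \<or> (\<forall>t\<in>{a..b}. concave_on UNIV (H t))) \<or>
    (\<exists>g h k. (\<forall>t\<in>{a..b}. \<forall>p. H t p = g t * h p + k t) \<and>
             ((\<forall>t\<in>{a..b}. g t \<ge> 0) \<or> (\<forall>t\<in>{a..b}. g t \<le> 0)))"

definition grad_x :: "((real \<times> (real^'n)) \<Rightarrow>\<^sub>L real) \<Rightarrow> real^'n" where
  "grad_x D = (\<chi> i. blinfun_apply D (0, axis i 1))"

definition time_deriv :: "((real \<times> (real^'n)) \<Rightarrow>\<^sub>L real) \<Rightarrow> real" where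
  "time_deriv D = blinfun_apply D (1, 0)"

definition viscosity_solution ::
  "(real \<Rightarrow> real^'n \<Rightarrow> real) \<Rightarrow> real \<Rightarrow> real \<Rightarrow> (real^'n \<Rightarrow> real) \<Rightarrow> (real \<Rightarrow> real^'n \<Rightarrow> real) \<Rightarrow> bool" where
  "viscosity_solution H a b g u \<longleftrightarrow>
    continuous_on ({a..b} \<times> UNIV) (\<lambda>(t,x). u t x) \<and>
    (\<forall>x. u a x = g x) \<and>
    (\<forall>(v :: real \<Rightarrow> real^'n \<Rightarrow> real) Dv.
       ((\<forall>z\<in>{a<..<b} \<times> UNIV. ((\<lambda>(t,x). v t x) has_derivative blinfun_apply (Dv z)) (at z))
        \<and> continuous_on ({a<..<b} \<times> UNIV) Dv) \<longrightarrow>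
       (\<forall>t0\<in>{a<..<b}. \<forall>x0.
          ((\<exists>e>0. \<forall>t x. dist (t,x) (t0,x0) < e \<longrightarrow> u t x - v t x \<le> u t0 x0 - v t0 x0) \<longrightarrow>
             time_deriv (Dv (t0,x0)) + H t0 (grad_x (Dv (t0,x0))) \<le> 0) \<and>
          ((\<exists>e>0. \<forall>t x. dist (t,x) (t0,x0) < e \<longrightarrow> u t x - v t x \<ge> u t0 x0 - v t0 x0) \<longrightarrow>
             time_deriv (Dv (t0,x0)) + H t0 (grad_x (Dv (t0,x0))) \<ge> 0)))"

end

theory Submission
  imports Defs
begin


lemma fconj_ge: "ereal (inner p y - f y) \<le> fconj f p"
  unfolding fconj_def by (rule SUP_upper[where i=y]) simp

lemma fconj_not_minf: "fconj f p \<noteq> -\<infinity>"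
  using fconj_ge[of p 0 f] by auto

lemma fconj_lsc:
  fixes f :: "'a::real_inner \<Rightarrow> real"
  assumes q: "q \<longlonglongrightarrow> q0" and c: "c \<longlonglongrightarrow> c0"
    and le: "\<And>k. fconj f (q k) \<le> ereal (c k)"
  shows "fconj f q0 \<le> ereal c0"
  unfolding fconj_def
proof (rule SUP_least)
  fix y
  have 1: "\<And>k. inner (q k) y - f y \<le> c k"
    using order_trans[OF fconj_ge le] by simp
  have 2: "(\<lambda>k. inner (q k) y - f y) \<longlonglongrightarrow> inner q0 y - f y"
    by (intro tendsto_intros q)
  have "inner q0 y - f y \<le> c0"
    using LIMSEQ_le[OF 2 c] 1 by blast
  then show "ereal (inner q0 y - f y) \<le> ereal c0" by simp
qed
lemma fenchel_young: "ereal (inner x q) - fconj f q \<le> ereal (f x)"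
proof (cases "fconj f q")
  case (real r)
  have "ereal (inner q x - f x) \<le> ereal r" using fconj_ge[of q x f] real by simp
  then show ?thesis using real by (simp add: inner_commute)
next
  case PInf then show ?thesis by simp
next
  case MInf then show ?thesis using fconj_not_minf by blast
qed

lemma fconj_convex:
  fixes f :: "'a::real_inner \<Rightarrow> real"
  assumes "finite I" "\<And>i. i \<in> I \<Longrightarrow> l i \<ge> 0" "sum l I = 1"
    and "\<And>i. i \<in> I \<Longrightarrow> fconj f (q i) = ereal (c i)"
  shows "fconj f (\<Sum>i\<in>I. l i *\<^sub>R q i) \<le> ereal (\<Sum>i\<in>I. l i * c i)"
  unfolding fconj_def
proof (rule SUP_least)
  fix y
  have "inner (\<Sum>i\<in>I. l i *\<^sub>R q i) y - f y = (\<Sum>i\<in>I. l i * (inner (q i) y - f y))"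
    using assms(3) by (simp add: inner_sum_left sum_subtractf right_diff_distrib sum_distrib_right[symmetric])
  also have "\<dots> \<le> (\<Sum>i\<in>I. l i * c i)"
  proof (rule sum_mono)
    fix i assume i: "i \<in> I"
    have "inner (q i) y - f y \<le> c i" using fconj_ge[of "q i" y f] assms(4)[OF i] by simp
    then show "l i * (inner (q i) y - f y) \<le> l i * c i"
      using assms(2)[OF i] by (simp add: mult_left_mono)
  qed
  finally show "ereal (inner (\<Sum>i\<in>I. l i *\<^sub>R q i) y - f y) \<le> ereal (\<Sum>i\<in>I. l i * c i)" by simp
qed

lemma subgradient_exists:
  fixes \<sigma> :: "'a::euclidean_space \<Rightarrow> real"
  assumes cv: "convex_on UNIV \<sigma>"
  shows "\<exists>q. \<forall>y. \<sigma> y \<ge> \<sigma> x + inner q (y - x)"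
proof -
  define E where "E = epigraph UNIV \<sigma>"
  have cE: "convex E" unfolding E_def using cv by (simp add: convex_epigraph)
  have cont: "continuous_on UNIV \<sigma>" using convex_on_continuous[OF open_UNIV cv] .
  have c1: "continuous_on UNIV (\<lambda>z::'a \<times> real. \<sigma> (fst z))"
    by (rule continuous_on_compose2[OF cont continuous_on_fst[OF continuous_on_id]]) simp
  have "open {z :: 'a \<times> real. \<sigma> (fst z) < snd z}"
    by (rule open_Collect_less[OF c1 continuous_on_snd[OF continuous_on_id]])
  moreover have "{z :: 'a \<times> real. \<sigma> (fst z) < snd z} \<subseteq> E"
    unfolding E_def epigraph_def by auto
  moreover have "(x, \<sigma> x + 1) \<in> {z :: 'a \<times> real. \<sigma> (fst z) < snd z}" by simp
  ultimately have "(x, \<sigma> x + 1) \<in> interior E" using interior_maximal by blast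
  then have "interior E \<noteq> {}" by blast
  then have ri: "rel_interior E = interior E"
    by (intro rel_interior_interior affine_hull_nonempty_interior)
  have xin: "(x, \<sigma> x) \<in> E" unfolding E_def by (simp add: mem_epigraph)
  have nint: "(x, \<sigma> x) \<notin> interior E"
  proof
    assume "(x, \<sigma> x) \<in> interior E"
    then obtain e where e: "e > 0" "ball (x, \<sigma> x) e \<subseteq> E"
      unfolding mem_interior by blast
    have "(x, \<sigma> x - e/2) \<in> ball (x, \<sigma> x) e" using e(1)
      by (simp add: dist_Pair_Pair dist_real_def)
    then have "(x, \<sigma> x - e/2) \<in> E" using e(2) by blast
    then show False using e(1) unfolding E_def by (simp add: mem_epigraph)
  qed
  have xc: "(x, \<sigma> x) \<in> closure E" using closure_subset xin by blast
  have xr: "(x, \<sigma> x) \<notin> rel_interior E" using ri nint by simp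
  obtain a where a: "a \<noteq> 0" "\<And>y. y \<in> closure E \<Longrightarrow> a \<bullet> (x, \<sigma> x) \<le> a \<bullet> y"
    "\<And>y. y \<in> rel_interior E \<Longrightarrow> a \<bullet> (x, \<sigma> x) < a \<bullet> y"
    using supporting_hyperplane_relative_frontier[OF cE xc xr] by blast
  obtain \<alpha> \<beta> where ab: "a = (\<alpha>, \<beta>)" by (cases a)
  have key: "\<And>y s. \<sigma> y \<le> s \<Longrightarrow> inner \<alpha> x + \<beta> * \<sigma> x \<le> inner \<alpha> y + \<beta> * s"
  proof -
    fix y s assume "\<sigma> y \<le> s"
    then have "(y, s) \<in> E" unfolding E_def by (simp add: mem_epigraph)
    then have "(y, s) \<in> closure E" using closure_subset by blast
    then show "inner \<alpha> x + \<beta> * \<sigma> x \<le> inner \<alpha> y + \<beta> * s" using a(2)[of "(y,s)"] ab by (simp add: inner_Pair)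
  qed
  have b0: "\<beta> \<ge> 0" using key[of x "\<sigma> x + 1"] by (simp add: distrib_left)
  have "\<beta> \<noteq> 0"
  proof
    assume "\<beta> = 0"
    then have "inner \<alpha> x \<le> inner \<alpha> (x - \<alpha>)" using key[of "x - \<alpha>" "\<sigma> (x - \<alpha>)"] by simp
    then have "inner \<alpha> \<alpha> \<le> 0" by (simp add: inner_diff_right)
    then have "\<alpha> = 0" by (meson inner_gt_zero_iff not_le)
    with \<open>\<beta> = 0\<close> ab a(1) show False by (simp add: zero_prod_def)
  qed
  with b0 have bp: "\<beta> > 0" by simp
  show ?thesis
  proof (intro exI allI)
    fix y
    have "inner \<alpha> x + \<beta> * \<sigma> x \<le> inner \<alpha> y + \<beta> * \<sigma> y" using key by simp
    then have "\<beta> * \<sigma> x + inner \<alpha> (x - y) \<le> \<beta> * \<sigma> y" by (simp add: inner_diff_right)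
    then have "\<sigma> x + inner ((1/\<beta>) *\<^sub>R \<alpha>) (x - y) \<le> \<sigma> y" using bp
      by (simp add: field_simps)
    then show "\<sigma> x + inner (- (1/\<beta>) *\<^sub>R \<alpha>) (y - x) \<le> \<sigma> y"
      by (simp add: inner_diff_right inner_diff_left)
  qed
qed

lemma biconj_attained:
  fixes \<sigma> :: "'a::euclidean_space \<Rightarrow> real"
  assumes cv: "convex_on UNIV \<sigma>"
  shows "\<exists>q. fconj \<sigma> q = ereal (inner x q - \<sigma> x)"
proof -
  obtain q where q: "\<And>y. \<sigma> y \<ge> \<sigma> x + inner q (y - x)" using subgradient_exists[OF cv] by blast
  have "fconj \<sigma> q \<le> ereal (inner x q - \<sigma> x)"
    unfolding fconj_def
  proof (rule SUP_least)
    fix y show "ereal (inner q y - \<sigma> y) \<le> ereal (inner x q - \<sigma> x)"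
      using q[of y] by (simp add: inner_diff_right inner_commute)
  qed
  moreover have "ereal (inner x q - \<sigma> x) \<le> fconj \<sigma> q"
    using fconj_ge[of q x \<sigma>] by (simp add: inner_commute)
  ultimately show ?thesis by (intro exI[of _ q]) simp
qed




locale hopf =
  fixes \<sigma> :: "real^'n \<Rightarrow> real" and H :: "real \<Rightarrow> real^'n \<Rightarrow> real" and t1 T :: real
  assumes t1T: "t1 < T" and cvx: "convex_on UNIV \<sigma>"
    and Hc: "continuous_on ({t1..T} \<times> UNIV) (\<lambda>(t,p). H t p)"
    and A1: "cond_A1 \<sigma> H t1 T" and A2: "cond_A2 H t1 T"
begin

definition G where "G t q = integral {t1..t} (\<lambda>\<tau>. H \<tau> q)"

lemma H_cont_t: "continuous_on {t1..T} (\<lambda>\<tau>. H \<tau> q)"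
proof -
  have "continuous_on {t1..T} ((\<lambda>(t,p). H t p) \<circ> (\<lambda>\<tau>. (\<tau>, q)))"
    by (rule continuous_on_compose[OF _ continuous_on_subset[OF Hc]])
       (auto intro!: continuous_intros)
  then show ?thesis by (simp add: o_def)
qed

lemma H_cont_q: "t \<in> {t1..T} \<Longrightarrow> continuous_on UNIV (\<lambda>q. H t q)"
proof -
  assume t: "t \<in> {t1..T}"
  have "continuous_on UNIV ((\<lambda>(t,p). H t p) \<circ> (\<lambda>q. (t, q)))"
    by (rule continuous_on_compose[OF _ continuous_on_subset[OF Hc]])
       (use t in \<open>auto intro!: continuous_intros\<close>)
  then show ?thesis by (simp add: o_def)
qed

lemma H_int: "{a..b} \<subseteq> {t1..T} \<Longrightarrow> (\<lambda>\<tau>. H \<tau> q) integrable_on {a..b}"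
  by (rule integrable_continuous_interval, rule continuous_on_subset[OF H_cont_t])

lemma G_t1[simp]: "G t1 q = 0"
  unfolding G_def by simp

lemma G_diff:
  assumes "t1 \<le> s" "s \<le> t" "t \<le> T"
  shows "G t q - G s q = integral {s..t} (\<lambda>\<tau>. H \<tau> q)"
  using Henstock_Kurzweil_Integration.integral_combine[OF assms(1,2) H_int[of t1 t q]] assms unfolding G_def by auto

lemma G_deriv:
  assumes "t0 \<in> {t1<..<T}"
  shows "((\<lambda>t. G t q) has_real_derivative H t0 q) (at t0)"
proof -
  have "((\<lambda>t. G t q) has_vector_derivative H t0 q) (at t0 within {t1..T})"
    unfolding G_def by (rule integral_has_vector_derivative[OF H_cont_t]) (use assms in auto)
  moreover have "at t0 within {t1..T} = at t0"
    by (rule at_within_interior) (use assms in auto)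
  ultimately show ?thesis by (simp add: has_real_derivative_iff_has_vector_derivative)
qed

lemma H_cont_at:
  assumes "t0 \<in> {t1..T}" "e > 0"
  shows "\<exists>d>0. \<forall>t\<in>{t1..T}. \<forall>q. \<bar>t - t0\<bar> < d \<and> norm (q - q0) < d \<longrightarrow> \<bar>H t q - H t0 q0\<bar> < e"
proof -
  from Hc assms obtain d where d: "d > 0" "\<forall>z\<in>{t1..T} \<times> UNIV. dist z (t0, q0) < d \<longrightarrow>
      dist ((\<lambda>(t,p). H t p) z) ((\<lambda>(t,p). H t p) (t0,q0)) < e"
    unfolding continuous_on_iff by (metis UNIV_I mem_Sigma_iff)
  show ?thesis
  proof (intro exI[of _ "d/2"] conjI ballI allI impI)
    fix t q assume t: "t \<in> {t1..T}" and h: "\<bar>t - t0\<bar> < d/2 \<and> norm (q - q0) < d/2"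
    have "dist (t, q) (t0, q0) \<le> dist t t0 + dist q q0"
      using sqrt_sum_squares_le_sum_abs[of "dist t t0" "dist q q0"] by (simp add: dist_Pair_Pair)
    also have "\<dots> < d" using h by (simp add: dist_real_def dist_norm)
    finally show "\<bar>H t q - H t0 q0\<bar> < e" using d(2) t by (force simp: dist_real_def)
  qed (use d in auto)
qed

lemma G_dq:
  assumes t0: "t0 \<in> {t1<..T}" and s: "\<And>k. s k > 0" "\<And>k. t0 - s k \<ge> t1" "s \<longlonglongrightarrow> 0"
    and q: "q \<longlonglongrightarrow> q0"
  shows "(\<lambda>k. (G t0 (q k) - G (t0 - s k) (q k)) / s k) \<longlonglongrightarrow> H t0 q0"
proof (rule LIMSEQ_I)
  fix r :: real assume r: "r > 0"
  obtain d where d: "d > 0" "\<forall>t\<in>{t1..T}. \<forall>q. \<bar>t - t0\<bar> < d \<and> norm (q - q0) < d \<longrightarrow> \<bar>H t q - H t0 q0\<bar> < r/2"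
    using H_cont_at[of t0 "r/2" q0] t0 r by auto
  obtain N1 where N1: "\<forall>k\<ge>N1. norm (s k - 0) < d" using LIMSEQ_D[OF s(3) d(1)] by blast
  obtain N2 where N2: "\<forall>k\<ge>N2. norm (q k - q0) < d" using LIMSEQ_D[OF q d(1)] by blast
  show "\<exists>N. \<forall>k\<ge>N. norm ((G t0 (q k) - G (t0 - s k) (q k)) / s k - H t0 q0) < r"
  proof (intro exI[of _ "max N1 N2"] allI impI)
    fix k assume k: "max N1 N2 \<le> k"
    have sk: "s k < d" "norm (q k - q0) < d" using N1 N2 k s(1)[of k] by auto
    have int_eq: "G t0 (q k) - G (t0 - s k) (q k) = integral {t0 - s k..t0} (\<lambda>\<tau>. H \<tau> (q k))"
      using G_diff[of "t0 - s k" t0 "q k"] s(1)[of k] s(2)[of k] t0 by auto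
    have "integral {t0 - s k..t0} (\<lambda>\<tau>. H \<tau> (q k) - H t0 q0)
        = integral {t0 - s k..t0} (\<lambda>\<tau>. H \<tau> (q k)) - integral {t0 - s k..t0} (\<lambda>\<tau>. H t0 q0)"
      by (rule integral_diff) (use H_int[of "t0 - s k" t0 "q k"] s(2)[of k] t0 in auto)
    also have "integral {t0 - s k..t0} (\<lambda>\<tau>. H t0 q0) = s k * H t0 q0"
      using s(1)[of k] by simp
    finally have eq2: "G t0 (q k) - G (t0 - s k) (q k) - s k * H t0 q0
        = integral {t0 - s k..t0} (\<lambda>\<tau>. H \<tau> (q k) - H t0 q0)" using int_eq by simp
    have "norm (integral {t0 - s k..t0} (\<lambda>\<tau>. H \<tau> (q k) - H t0 q0)) \<le> r/2 * (t0 - (t0 - s k))"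
    proof (rule integral_bound)
      show "t0 - s k \<le> t0" using s(1)[of k] by simp
      show "continuous_on {t0 - s k..t0} (\<lambda>\<tau>. H \<tau> (q k) - H t0 q0)"
        by (intro continuous_on_diff continuous_on_const continuous_on_subset[OF H_cont_t[of "q k"]])
           (use s(2)[of k] t0 in auto)
      fix \<tau> assume "\<tau> \<in> {t0 - s k..t0}"
      then have "\<tau> \<in> {t1..T}" "\<bar>\<tau> - t0\<bar> < d" using sk s(2)[of k] t0 by auto
      then show "norm (H \<tau> (q k) - H t0 q0) \<le> r/2"
        using d(2) sk by (simp add: less_imp_le)
    qed
    then have "\<bar>G t0 (q k) - G (t0 - s k) (q k) - s k * H t0 q0\<bar> \<le> r/2 * s k"
      using eq2 by simp
    then have "\<bar>G t0 (q k) - G (t0 - s k) (q k) - s k * H t0 q0\<bar> / s k \<le> r/2"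
      using s(1)[of k] by (subst pos_divide_le_eq) auto
    then have "\<bar>(G t0 (q k) - G (t0 - s k) (q k) - s k * H t0 q0) / s k\<bar> \<le> r/2"
      using s(1)[of k] by (simp add: abs_divide)
    moreover have "(G t0 (q k) - G (t0 - s k) (q k) - s k * H t0 q0) / s k
        = (G t0 (q k) - G (t0 - s k) (q k)) / s k - H t0 q0"
      using s(1)[of k] by (simp add: diff_divide_distrib)
    ultimately show "norm ((G t0 (q k) - G (t0 - s k) (q k)) / s k - H t0 q0) < r"
      using r by simp
  qed
qed

end



context hopf begin

lemma H_unif:
  assumes e: "e > 0"
  shows "\<exists>d>0. \<forall>\<tau>\<in>{t1..T}. \<forall>q'. norm (q' - q) < d \<longrightarrow> \<bar>H \<tau> q' - H \<tau> q\<bar> < e"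
proof -
  let ?K = "{t1..T} \<times> cball q 1"
  have "uniformly_continuous_on ?K (\<lambda>(t,p). H t p)"
    by (rule compact_uniformly_continuous[OF continuous_on_subset[OF Hc]])
       (auto intro: compact_Times)
  then obtain d where d: "d > 0" "\<forall>z\<in>?K. \<forall>z'\<in>?K. dist z' z < d \<longrightarrow>
      dist ((\<lambda>(t,p). H t p) z') ((\<lambda>(t,p). H t p) z) < e"
    unfolding uniformly_continuous_on_def using e by blast
  show ?thesis
  proof (intro exI[of _ "min d 1"] conjI ballI allI impI)
    fix \<tau> q' assume \<tau>: "\<tau> \<in> {t1..T}" and h: "norm (q' - q) < min d 1"
    have "(\<tau>, q') \<in> ?K" "(\<tau>, q) \<in> ?K" using \<tau> h by (auto simp: dist_norm norm_minus_commute)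
    moreover have "dist (\<tau>, q') (\<tau>, q) < d" using h by (simp add: dist_Pair_Pair dist_norm)
    ultimately have "dist (H \<tau> q') (H \<tau> q) < e" using d(2) by fastforce
    then show "\<bar>H \<tau> q' - H \<tau> q\<bar> < e" by (simp add: dist_real_def)
  qed (use d in auto)
qed

lemma G_cont_t: "continuous_on {t1..T} (\<lambda>t. G t q)"
  unfolding G_def by (rule indefinite_integral_continuous_1[OF H_int]) simp

lemma G_cont_seq:
  assumes tk: "\<And>k. tk k \<in> {t1..T}" "t \<in> {t1..T}" "tk \<longlonglongrightarrow> t" and qk: "qk \<longlonglongrightarrow> q"
  shows "(\<lambda>k. G (tk k) (qk k)) \<longlonglongrightarrow> G t q"
proof -
  have 1: "(\<lambda>k. G (tk k) q) \<longlonglongrightarrow> G t q"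
    by (rule continuous_on_tendsto_compose[OF G_cont_t tk(3) tk(2)]) (use tk(1) in auto)
  have 2: "(\<lambda>k. G (tk k) (qk k) - G (tk k) q) \<longlonglongrightarrow> 0"
  proof (rule LIMSEQ_I)
    fix r :: real assume r: "r > 0"
    define e where "e = r / (2 * (T - t1))"
    have e: "e > 0" using r t1T by (simp add: e_def)
    obtain d where d: "d > 0" "\<forall>\<tau>\<in>{t1..T}. \<forall>q'. norm (q' - q) < d \<longrightarrow> \<bar>H \<tau> q' - H \<tau> q\<bar> < e"
      using H_unif[OF e] by blast
    obtain N where N: "\<forall>k\<ge>N. norm (qk k - q) < d" using LIMSEQ_D[OF qk d(1)] by blast
    show "\<exists>N. \<forall>k\<ge>N. norm (G (tk k) (qk k) - G (tk k) q - 0) < r"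
    proof (intro exI[of _ N] allI impI)
      fix k assume k: "N \<le> k"
      have "G (tk k) (qk k) - G (tk k) q = integral {t1..tk k} (\<lambda>\<tau>. H \<tau> (qk k) - H \<tau> q)"
        unfolding G_def by (rule integral_diff[symmetric]) (use tk(1)[of k] in \<open>auto intro!: H_int\<close>)
      moreover have "norm (integral {t1..tk k} (\<lambda>\<tau>. H \<tau> (qk k) - H \<tau> q)) \<le> e * (tk k - t1)"
      proof (rule integral_bound)
        show "t1 \<le> tk k" using tk(1)[of k] by simp
        show "continuous_on {t1..tk k} (\<lambda>\<tau>. H \<tau> (qk k) - H \<tau> q)"
          by (intro continuous_on_diff continuous_on_subset[OF H_cont_t]) (use tk(1)[of k] in auto)
        fix \<tau> assume "\<tau> \<in> {t1..tk k}"
        then have "\<tau> \<in> {t1..T}" using tk(1)[of k] by auto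
        then show "norm (H \<tau> (qk k) - H \<tau> q) \<le> e" using d(2) N k by (simp add: less_imp_le)
      qed
      moreover have "e * (tk k - t1) \<le> e * (T - t1)"
        using tk(1)[of k] e by (intro mult_left_mono) auto
      moreover have "e * (T - t1) = r / 2" unfolding e_def using t1T by (simp add: divide_simps)
      ultimately show "norm (G (tk k) (qk k) - G (tk k) q - 0) < r" using r by simp
    qed
  qed
  have "(\<lambda>k. (G (tk k) (qk k) - G (tk k) q) + G (tk k) q) \<longlonglongrightarrow> 0 + G t q"
    by (rule tendsto_add[OF 2 1])
  then show ?thesis by simp
qed

definition \<Phi> where "\<Phi> t x q = ereal (inner x q) - fconj \<sigma> q - ereal (G t q)"
definition mx where "mx t x = (SUP q. \<Phi> t x q)"
definition u where "u t x = real_of_ereal (mx t x)"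

lemma Phi_real: "fconj \<sigma> q = ereal c \<Longrightarrow> \<Phi> t x q = ereal (inner x q - c - G t q)"
  by (simp add: \<Phi>_def)

lemma Phi_ge_iff: "ereal m \<le> \<Phi> t x q \<longleftrightarrow> fconj \<sigma> q \<le> ereal (inner x q - G t q - m)"
proof (cases "fconj \<sigma> q")
  case (real c) then show ?thesis by (simp add: \<Phi>_def) linarith
next
  case PInf then show ?thesis by (simp add: \<Phi>_def)
next
  case MInf then show ?thesis using fconj_not_minf by blast
qed

lemma Phi_le: "\<Phi> t x q \<le> ereal (\<sigma> x - G t q)"
proof -
  have "ereal (inner x q) - fconj \<sigma> q \<le> ereal (\<sigma> x)" by (rule fenchel_young)
  then show ?thesis unfolding \<Phi>_def
    by (cases "fconj \<sigma> q") auto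
qed

lemma Phi_le_mx: "\<Phi> t x q \<le> mx t x"
  unfolding mx_def by (rule SUP_upper) simp

lemma Phi_usc:
  assumes tk: "\<And>k. tk k \<in> {t1..T}" "t \<in> {t1..T}" "tk \<longlonglongrightarrow> t" and xk: "xk \<longlonglongrightarrow> x"
    and qk: "qk \<longlonglongrightarrow> q" and m: "\<And>k. ereal (m k) \<le> \<Phi> (tk k) (xk k) (qk k)" "m \<longlonglongrightarrow> m0"
  shows "ereal m0 \<le> \<Phi> t x q"
proof -
  have "fconj \<sigma> q \<le> ereal (inner x q - G t q - m0)"
  proof (rule fconj_lsc[OF qk])
    show "(\<lambda>k. inner (xk k) (qk k) - G (tk k) (qk k) - m k) \<longlonglongrightarrow> inner x q - G t q - m0"
      by (intro tendsto_diff tendsto_inner xk qk G_cont_seq[OF tk qk] m(2))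
    fix k show "fconj \<sigma> (qk k) \<le> ereal (inner (xk k) (qk k) - G (tk k) (qk k) - m k)"
      using m(1)[of k] by (simp add: Phi_ge_iff)
  qed
  then show ?thesis by (simp add: Phi_ge_iff)
qed

end



context hopf begin

lemma A1':
  assumes "t0 \<in> {t1..T}"
  shows "\<exists>r>0. \<exists>N>0. \<forall>t\<in>{t1..T}. \<forall>x p. \<bar>t - t0\<bar> + norm (x - x0) < r \<and> norm p > N \<longrightarrow>
           \<Phi> t x p < (SUP q\<in>cball 0 N. \<Phi> t x q)"
  using A1 assms unfolding cond_A1_def \<Phi>_def G_def by blast

lemma H_bound: "\<exists>B\<ge>0. \<forall>\<tau>\<in>{t1..T}. \<forall>q\<in>cball 0 N. \<bar>H \<tau> q\<bar> \<le> B"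
proof -
  have "compact ((\<lambda>(t,p). H t p) ` ({t1..T} \<times> cball 0 N))"
    by (rule compact_continuous_image[OF continuous_on_subset[OF Hc]]) (auto intro: compact_Times)
  then obtain B where B: "\<forall>y\<in>(\<lambda>(t,p). H t p) ` ({t1..T} \<times> cball 0 N). norm y \<le> B"
    using compact_imp_bounded bounded_iff by metis
  show ?thesis
  proof (intro exI[of _ "max B 0"] conjI ballI)
    fix \<tau> q assume "\<tau> \<in> {t1..T}" "q \<in> cball (0::real^'n) N"
    then have "norm (H \<tau> q) \<le> B" using B by force
    then show "\<bar>H \<tau> q\<bar> \<le> max B 0" by simp
  qed simp
qed

lemma G_bound: "\<exists>B. \<forall>t\<in>{t1..T}. \<forall>q\<in>cball 0 N. \<bar>G t q\<bar> \<le> B"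
proof -
  obtain B where B: "B \<ge> 0" "\<forall>\<tau>\<in>{t1..T}. \<forall>q\<in>cball 0 N. \<bar>H \<tau> q\<bar> \<le> B"
    using H_bound[of N] by blast
  show ?thesis
  proof (intro exI[of _ "B * (T - t1)"] ballI)
    fix t q assume t: "t \<in> {t1..T}" and q: "q \<in> cball (0::real^'n) N"
    have "norm (integral {t1..t} (\<lambda>\<tau>. H \<tau> q)) \<le> B * (t - t1)"
    proof (rule integral_bound)
      show "t1 \<le> t" using t by simp
      show "continuous_on {t1..t} (\<lambda>\<tau>. H \<tau> q)" by (rule continuous_on_subset[OF H_cont_t]) (use t in auto)
      fix \<tau> assume "\<tau> \<in> {t1..t}" then show "norm (H \<tau> q) \<le> B" using B(2) q t by auto
    qed
    also have "\<dots> \<le> B * (T - t1)" using t B(1) by (intro mult_left_mono) auto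
    finally show "\<bar>G t q\<bar> \<le> B * (T - t1)" by (simp add: G_def)
  qed
qed

lemma freq_subseq:
  assumes "frequently P sequentially"
  shows "\<exists>r::nat\<Rightarrow>nat. strict_mono r \<and> (\<forall>n. P (r n))"
proof -
  have "infinite {n. P n}" using assms by (simp add: frequently_cofinite[symmetric] cofinite_eq_sequentially)
  then show ?thesis using infinite_enumerate by blast
qed

lemma attain_loc:
  assumes t0: "t0 \<in> {t1..T}"
  shows "\<exists>r>0. \<exists>N>0. \<forall>t\<in>{t1..T}. \<forall>x. \<bar>t - t0\<bar> + norm (x - x0) < r \<longrightarrow>
           (\<exists>q. norm q \<le> N \<and> mx t x = \<Phi> t x q \<and> mx t x = ereal (real_of_ereal (mx t x))) \<and>
           (\<forall>q. mx t x = \<Phi> t x q \<longrightarrow> norm q \<le> N)"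
proof -
  obtain r N where rN: "r > 0" "N > 0" "\<forall>t\<in>{t1..T}. \<forall>x p. \<bar>t - t0\<bar> + norm (x - x0) < r \<and> norm p > N \<longrightarrow>
           \<Phi> t x p < (SUP q\<in>cball 0 N. \<Phi> t x q)"
    using A1'[OF t0, of x0] by blast
  obtain B where B: "\<forall>t\<in>{t1..T}. \<forall>q\<in>cball 0 N. \<bar>G t q\<bar> \<le> B" using G_bound[of N] by blast
  have main: "(\<exists>q. norm q \<le> N \<and> mx t x = \<Phi> t x q \<and> mx t x = ereal (real_of_ereal (mx t x))) \<and>
           (\<forall>q. mx t x = \<Phi> t x q \<longrightarrow> norm q \<le> N)"
    if t: "t \<in> {t1..T}" and near: "\<bar>t - t0\<bar> + norm (x - x0) < r" for t x
  proof (intro conjI allI impI)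
    define S where "S = (SUP q\<in>cball 0 N. \<Phi> t x q)"
    have hp: "\<And>p. norm p > N \<Longrightarrow> \<Phi> t x p < S" using rN(3) t near unfolding S_def by blast
    have mxS: "mx t x = S"
    proof (rule antisym)
      show "mx t x \<le> S" unfolding mx_def
      proof (rule SUP_least)
        fix q show "\<Phi> t x q \<le> S"
        proof (cases "norm q \<le> N")
          case True then show ?thesis unfolding S_def by (intro SUP_upper) simp
        next
          case False then show ?thesis using hp[of q] by simp
        qed
      qed
      show "S \<le> mx t x" unfolding S_def mx_def by (rule SUP_subset_mono) auto
    qed
    obtain p :: "real^'n" where p: "norm p = N + 1" using vector_choose_size[of "N+1"] rN(2) by auto
    have Sminf: "S \<noteq> -\<infinity>" using hp[of p] p by auto
    have "S \<le> ereal (\<sigma> x + B)" unfolding S_def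
    proof (rule SUP_least)
      fix q :: "real^'n" assume q: "q \<in> cball 0 N"
      have "\<Phi> t x q \<le> ereal (\<sigma> x - G t q)" by (rule Phi_le)
      also have "\<dots> \<le> ereal (\<sigma> x + B)" using B t q by force
      finally show "\<Phi> t x q \<le> ereal (\<sigma> x + B)" .
    qed
    then have Sinf: "S \<noteq> \<infinity>" by auto
    obtain s where s: "S = ereal s" using Sminf Sinf by (cases S) auto
    have "\<forall>k. \<exists>q. q \<in> cball 0 N \<and> ereal (s - inverse (real (Suc k))) < \<Phi> t x q"
    proof
      fix k
      have "ereal (s - inverse (real (Suc k))) < S" using s by simp
      then show "\<exists>q. q \<in> cball 0 N \<and> ereal (s - inverse (real (Suc k))) < \<Phi> t x q"
        unfolding S_def less_SUP_iff by blast
    qed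
    then obtain qs where qs: "\<And>k. qs k \<in> cball 0 N" "\<And>k. ereal (s - inverse (real (Suc k))) < \<Phi> t x (qs k)"
      by metis
    obtain l \<rho> where l: "l \<in> cball 0 N" "strict_mono \<rho>" "(qs \<circ> \<rho>) \<longlonglongrightarrow> l"
      using seq_compactE[OF compact_imp_seq_compact[OF compact_cball] ] qs(1) by metis
    have inv0: "(\<lambda>k. inverse (real (Suc (\<rho> k)))) \<longlonglongrightarrow> 0"
      using LIMSEQ_subseq_LIMSEQ[OF LIMSEQ_inverse_real_of_nat l(2)] by (simp add: o_def)
    have "ereal s \<le> \<Phi> t x l"
    proof (rule Phi_usc[where tk="\<lambda>_. t" and xk="\<lambda>_. x" and qk="qs \<circ> \<rho>"
          and m="\<lambda>k. s - inverse (real (Suc (\<rho> k)))"])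
      show "(\<lambda>k. s - inverse (real (Suc (\<rho> k)))) \<longlonglongrightarrow> s"
        using tendsto_diff[OF tendsto_const inv0, of s] by simp
      fix k show "ereal (s - inverse (real (Suc (\<rho> k)))) \<le> \<Phi> t x ((qs \<circ> \<rho>) k)"
        using qs(2)[of "\<rho> k"] by simp
    qed (use t l in auto)
    moreover have "\<Phi> t x l \<le> S" unfolding S_def by (rule SUP_upper[OF l(1)])
    ultimately have eq: "mx t x = \<Phi> t x l" using mxS s by simp
    show "\<exists>q. norm q \<le> N \<and> mx t x = \<Phi> t x q \<and> mx t x = ereal (real_of_ereal (mx t x))"
    proof -
      have ms: "mx t x = ereal s" using mxS s by simp
      have r: "mx t x = ereal (real_of_ereal (mx t x))" unfolding ms by simp
      have n: "norm l \<le> N" using l(1) by simp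
      show ?thesis using n eq r by blast
    qed
    fix q assume "mx t x = \<Phi> t x q"
    then show "norm q \<le> N" using hp[of q] mxS by force
  qed
  show ?thesis using main rN(1,2) by blast
qed

lemma attain:
  assumes t: "t \<in> {t1..T}"
  shows "\<exists>q. mx t x = \<Phi> t x q" and "mx t x = ereal (u t x)"
proof -
  obtain r N where "r > 0" "\<forall>t'\<in>{t1..T}. \<forall>x'. \<bar>t' - t\<bar> + norm (x' - x) < r \<longrightarrow>
           (\<exists>q. norm q \<le> N \<and> mx t' x' = \<Phi> t' x' q \<and> mx t' x' = ereal (real_of_ereal (mx t' x')))"
    using attain_loc[OF t, of x] by blast
  then have "\<exists>q. norm q \<le> N \<and> mx t x = \<Phi> t x q \<and> mx t x = ereal (real_of_ereal (mx t x))"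
    using t by force
  then show "\<exists>q. mx t x = \<Phi> t x q" and "mx t x = ereal (u t x)" unfolding u_def by auto
qed

lemma u_init: "u t1 x = \<sigma> x"
proof -
  have "mx t1 x = ereal (\<sigma> x)"
  proof (rule antisym)
    show "mx t1 x \<le> ereal (\<sigma> x)" unfolding mx_def
      by (rule SUP_least) (use Phi_le[of t1 x] in simp)
    obtain q where q: "fconj \<sigma> q = ereal (inner x q - \<sigma> x)" using biconj_attained[OF cvx] by blast
    have "\<Phi> t1 x q = ereal (\<sigma> x)" using Phi_real[OF q] by simp
    then show "ereal (\<sigma> x) \<le> mx t1 x" using Phi_le_mx[of t1 x q] by simp
  qed
  then show ?thesis by (simp add: u_def)
qed

end



context hopf begin

lemma fconj_finite_at_max:
  assumes "mx t x = \<Phi> t x q" "t \<in> {t1..T}"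
  shows "\<exists>c. fconj \<sigma> q = ereal c \<and> u t x = inner x q - c - G t q"
proof (cases "fconj \<sigma> q")
  case (real c)
  have "ereal (u t x) = ereal (inner x q - c - G t q)"
    using attain(2)[OF assms(2), of x] assms(1) Phi_real[OF real] by simp
  then show ?thesis using real by simp
next
  case PInf
  then have "mx t x = -\<infinity>" using assms(1) by (simp add: \<Phi>_def)
  then show ?thesis using attain(2)[OF assms(2), of x] by simp
next
  case MInf then show ?thesis using fconj_not_minf by blast
qed

lemma u_cont_seq:
  assumes tk: "\<And>k. tk k \<in> {t1..T}" "t \<in> {t1..T}" "tk \<longlonglongrightarrow> t" and xk: "xk \<longlonglongrightarrow> x"
  shows "(\<lambda>k. u (tk k) (xk k)) \<longlonglongrightarrow> u t x"
proof -
  obtain q0 where q0: "mx t x = \<Phi> t x q0" using attain(1)[OF tk(2)] by blast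
  obtain c0 where c0: "fconj \<sigma> q0 = ereal c0" "u t x = inner x q0 - c0 - G t q0"
    using fconj_finite_at_max[OF q0 tk(2)] by blast
  define \<psi> where "\<psi> k = inner (xk k) q0 - c0 - G (tk k) q0" for k
  have psi_lim: "\<psi> \<longlonglongrightarrow> u t x" unfolding \<psi>_def c0(2)
    by (intro tendsto_diff tendsto_inner xk tendsto_const G_cont_seq[OF tk]) 
  have psi_le: "\<psi> k \<le> u (tk k) (xk k)" for k
  proof -
    have "ereal (\<psi> k) = \<Phi> (tk k) (xk k) q0" unfolding \<psi>_def using Phi_real[OF c0(1)] by simp
    also have "\<dots> \<le> mx (tk k) (xk k)" by (rule Phi_le_mx)
    also have "\<dots> = ereal (u (tk k) (xk k))" using attain(2)[OF tk(1)] by simp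
    finally show ?thesis by simp
  qed
  show ?thesis
  proof (rule order_tendstoI)
    fix a assume "a < u t x"
    then have "eventually (\<lambda>k. a < \<psi> k) sequentially" using order_tendstoD(1)[OF psi_lim] by blast
    then show "eventually (\<lambda>k. a < u (tk k) (xk k)) sequentially"
      by eventually_elim (use psi_le in \<open>auto intro: less_le_trans\<close>)
  next
    fix a assume a: "u t x < a"
    show "eventually (\<lambda>k. u (tk k) (xk k) < a) sequentially"
    proof (rule ccontr)
      assume "\<not> ?thesis"
      then have fr: "frequently (\<lambda>k. a \<le> u (tk k) (xk k)) sequentially"
        by (simp add: not_eventually not_less)
      obtain r N where rN: "r > 0" "N > 0" "\<forall>t'\<in>{t1..T}. \<forall>x'. \<bar>t' - t\<bar> + norm (x' - x) < r \<longrightarrow>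
           (\<forall>q. mx t' x' = \<Phi> t' x' q \<longrightarrow> norm q \<le> N)"
        using attain_loc[OF tk(2), of x] by blast
      have "(\<lambda>k. \<bar>tk k - t\<bar> + norm (xk k - x)) \<longlonglongrightarrow> \<bar>t - t\<bar> + norm (x - x)"
        by (intro tendsto_intros tk xk)
      then have "eventually (\<lambda>k. \<bar>tk k - t\<bar> + norm (xk k - x) < r) sequentially"
        using rN(1) by (intro order_tendstoD(2)) auto
      with fr have "frequently (\<lambda>k. a \<le> u (tk k) (xk k) \<and> \<bar>tk k - t\<bar> + norm (xk k - x) < r) sequentially"
        by (rule frequently_eventually_frequently)
      from freq_subseq[OF this] obtain \<rho> :: "nat \<Rightarrow> nat" where \<rho>0: "strict_mono \<rho>"
          "\<forall>n. a \<le> u (tk (\<rho> n)) (xk (\<rho> n)) \<and> \<bar>tk (\<rho> n) - t\<bar> + norm (xk (\<rho> n) - x) < r"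
        by blast
      then have \<rho>: "strict_mono \<rho>" "\<And>n. a \<le> u (tk (\<rho> n)) (xk (\<rho> n))"
          "\<And>n. \<bar>tk (\<rho> n) - t\<bar> + norm (xk (\<rho> n) - x) < r" by auto
      have "\<forall>n. \<exists>q. mx (tk (\<rho> n)) (xk (\<rho> n)) = \<Phi> (tk (\<rho> n)) (xk (\<rho> n)) q"
        using attain(1)[OF tk(1)] by blast
      then obtain qs where qs: "\<And>n. mx (tk (\<rho> n)) (xk (\<rho> n)) = \<Phi> (tk (\<rho> n)) (xk (\<rho> n)) (qs n)"
        by metis
      have qsb: "qs n \<in> cball 0 N" for n
        using rN(3)[rule_format, OF tk(1)[of "\<rho> n"] \<rho>(3)[of n] qs[of n]] by (simp add: mem_cball_0)
      obtain l \<rho>2 where l: "l \<in> cball 0 N" "strict_mono \<rho>2" "(qs \<circ> \<rho>2) \<longlonglongrightarrow> l"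
        using seq_compactE[OF compact_imp_seq_compact[OF compact_cball]] qsb by metis
      have "ereal a \<le> \<Phi> t x l"
      proof (rule Phi_usc[where tk="tk \<circ> \<rho> \<circ> \<rho>2" and xk="xk \<circ> \<rho> \<circ> \<rho>2" and qk="qs \<circ> \<rho>2"
            and m="\<lambda>_. a"])
        show "(tk \<circ> \<rho> \<circ> \<rho>2) \<longlonglongrightarrow> t"
          using LIMSEQ_subseq_LIMSEQ[OF tk(3) strict_mono_o[OF \<rho>(1) l(2)]] by (simp add: o_assoc)
        show "(xk \<circ> \<rho> \<circ> \<rho>2) \<longlonglongrightarrow> x"
          using LIMSEQ_subseq_LIMSEQ[OF xk strict_mono_o[OF \<rho>(1) l(2)]] by (simp add: o_assoc)
        fix k
        have "ereal a \<le> ereal (u (tk (\<rho> (\<rho>2 k))) (xk (\<rho> (\<rho>2 k))))" using \<rho>(2) by simp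
        also have "\<dots> = \<Phi> (tk (\<rho> (\<rho>2 k))) (xk (\<rho> (\<rho>2 k))) (qs (\<rho>2 k))"
          using attain(2)[OF tk(1)] qs by simp
        finally show "ereal a \<le> \<Phi> ((tk \<circ> \<rho> \<circ> \<rho>2) k) ((xk \<circ> \<rho> \<circ> \<rho>2) k) ((qs \<circ> \<rho>2) k)" by simp
      qed (use tk l in auto)
      also have "\<dots> \<le> mx t x" by (rule Phi_le_mx)
      also have "\<dots> = ereal (u t x)" using attain(2)[OF tk(2)] by simp
      finally show False using a by simp
    qed
  qed
qed

lemma u_cont: "continuous_on ({t1..T} \<times> UNIV) (\<lambda>(t,x). u t x)"
proof (rule continuous_on_sequentiallyI)
  fix z :: "nat \<Rightarrow> real \<times> (real^'n)" and a
  assume z: "\<forall>n. z n \<in> {t1..T} \<times> UNIV" and a: "a \<in> {t1..T} \<times> UNIV" and lim: "z \<longlonglongrightarrow> a"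
  have "(\<lambda>k. u (fst (z k)) (snd (z k))) \<longlonglongrightarrow> u (fst a) (snd a)"
    by (rule u_cont_seq) (use z a in \<open>auto intro: tendsto_fst tendsto_snd lim simp: mem_Times_iff\<close>)
  then show "(\<lambda>n. (\<lambda>(t,x). u t x) (z n)) \<longlonglongrightarrow> (\<lambda>(t,x). u t x) a"
    by (simp add: case_prod_beta)
qed

end



context hopf begin

lemma w_deriv:
  assumes t0: "t0 \<in> {t1<..<T}"
  shows "((\<lambda>z. inner (snd z) q0 - c0 - G (fst z) q0) has_derivative
           (\<lambda>h. inner (snd h) q0 - fst h * H t0 q0)) (at (t0, x0))"
proof -
  have g: "((\<lambda>t. G t q0) has_derivative (\<lambda>h. H t0 q0 * h)) (at t0)"
    using G_deriv[OF t0, of q0] by (simp add: has_field_derivative_def)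
  have f: "(fst has_derivative fst) (at (t0, x0))"
    by (rule bounded_linear_imp_has_derivative[OF bounded_linear_fst])
  have 1: "((\<lambda>z. G (fst z) q0) has_derivative (\<lambda>h. H t0 q0 * fst h)) (at (t0, x0))"
    using has_derivative_compose[OF f, of "\<lambda>t. G t q0"] g by simp
  have 2: "((\<lambda>z. inner (snd z) q0) has_derivative (\<lambda>h. inner (snd h) q0)) (at (t0, x0))"
    by (intro derivative_eq_intros) auto
  have "((\<lambda>z. inner (snd z) q0 - c0 - G (fst z) q0) has_derivative
           (\<lambda>h. inner (snd h) q0 - 0 - H t0 q0 * fst h)) (at (t0, x0))"
    by (intro has_derivative_diff 1 2 has_derivative_const)
  then show ?thesis by (simp add: mult.commute)
qed

lemma subsol:
  assumes t0: "t0 \<in> {t1<..<T}"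
    and D: "((\<lambda>(t,x). v t x) has_derivative blinfun_apply Dv0) (at (t0, x0))"
    and lm: "\<exists>e>0. \<forall>t x. dist (t,x) (t0,x0) < e \<longrightarrow> u t x - v t x \<le> u t0 x0 - v t0 x0"
  shows "time_deriv Dv0 + H t0 (grad_x Dv0) \<le> 0"
proof -
  have t0': "t0 \<in> {t1..T}" using t0 by auto
  obtain q0 where q0: "mx t0 x0 = \<Phi> t0 x0 q0" using attain(1)[OF t0'] by blast
  obtain c0 where c0: "fconj \<sigma> q0 = ereal c0" "u t0 x0 = inner x0 q0 - c0 - G t0 q0"
    using fconj_finite_at_max[OF q0 t0'] by blast
  define w where "w z = inner (snd z) q0 - c0 - G (fst z) q0" for z :: "real \<times> (real^'n)"
  have w_le: "w (t, x) \<le> u t x" if "t \<in> {t1..T}" for t x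
  proof -
    have "ereal (w (t,x)) = \<Phi> t x q0" unfolding w_def using Phi_real[OF c0(1)] by simp
    also have "\<dots> \<le> mx t x" by (rule Phi_le_mx)
    also have "\<dots> = ereal (u t x)" using attain(2)[OF that] by simp
    finally show ?thesis by simp
  qed
  have w0: "w (t0, x0) = u t0 x0" unfolding w_def using c0(2) by simp
  obtain e where e: "e > 0" "\<forall>t x. dist (t,x) (t0,x0) < e \<longrightarrow> u t x - v t x \<le> u t0 x0 - v t0 x0"
    using lm by blast
  define e' where "e' = min e (min (t0 - t1) (T - t0))"
  have e': "e' > 0" using e t0 by (simp add: e'_def)
  define f where "f z = w z - (\<lambda>(t,x). v t x) z" for z
  have fmax: "\<forall>y\<in>ball (t0, x0) e'. f y \<le> f (t0, x0)"
  proof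
    fix y assume y: "y \<in> ball (t0, x0) e'"
    obtain t x where yy: "y = (t, x)" by (cases y)
    have "dist t t0 \<le> dist y (t0,x0)" using dist_fst_le[of y "(t0,x0)"] yy by simp
    then have "\<bar>t - t0\<bar> < e'" using y by (simp add: dist_real_def dist_commute)
    then have t: "t \<in> {t1..T}" unfolding e'_def by auto
    have "dist (t,x) (t0,x0) < e" using y yy e'_def by (simp add: dist_commute)
    then have "u t x - v t x \<le> u t0 x0 - v t0 x0" using e(2) by blast
    then show "f y \<le> f (t0, x0)" unfolding f_def yy using w_le[OF t, of x] w0 by simp
  qed
  have fd: "(f has_derivative (\<lambda>h. (inner (snd h) q0 - fst h * H t0 q0) - blinfun_apply Dv0 h)) (at (t0, x0))"
    unfolding f_def w_def by (intro has_derivative_diff w_deriv[OF t0] D)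
  have zero: "(\<lambda>h. (inner (snd h) q0 - fst h * H t0 q0) - blinfun_apply Dv0 h) = (\<lambda>h. 0)"
    by (rule differential_zero_maxmin[OF _ open_ball fd]) (use e' fmax in auto)
  have Dv_eq: "blinfun_apply Dv0 h = inner (snd h) q0 - fst h * H t0 q0" for h
    using fun_cong[OF zero, of h] by simp
  have "time_deriv Dv0 = - H t0 q0" unfolding time_deriv_def using Dv_eq[of "(1,0)"] by simp
  moreover have "grad_x Dv0 = q0"
    unfolding grad_x_def vec_eq_iff using Dv_eq by (simp add: inner_axis')
  ultimately show ?thesis by simp
qed

end



lemma Dlin:
  fixes Dv0 :: "(real \<times> (real^'n)) \<Rightarrow>\<^sub>L real"
  shows "blinfun_apply Dv0 (a, \<xi>) = a * time_deriv Dv0 + inner (grad_x Dv0) \<xi>"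
proof -
  have 1: "(a, \<xi>) = a *\<^sub>R (1, 0) + (\<Sum>i\<in>UNIV. (\<xi> $ i) *\<^sub>R (0, axis i 1))"
  proof -
    have "(\<Sum>i\<in>UNIV. (\<xi> $ i) *\<^sub>R (0::real, axis i (1::real))) = (0, \<Sum>i\<in>UNIV. (\<xi> $ i) *\<^sub>R axis i 1)"
      by (simp add: prod_eq_iff fst_sum snd_sum)
    also have "(\<Sum>i\<in>UNIV. (\<xi> $ i) *\<^sub>R axis i (1::real)) = \<xi>"
      using basis_expansion[of \<xi>] by (simp add: scalar_mult_eq_scaleR)
    finally show ?thesis by simp
  qed
  have "blinfun_apply Dv0 (a, \<xi>) = a * blinfun_apply Dv0 (1, 0) + (\<Sum>i\<in>UNIV. \<xi> $ i * blinfun_apply Dv0 (0, axis i 1))"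
    by (subst 1, simp only: blinfun.add_right blinfun.sum_right blinfun.scaleR_right real_scaleR_def)
  also have "(\<Sum>i\<in>UNIV. \<xi> $ i * blinfun_apply Dv0 (0, axis i 1)) = inner (grad_x Dv0) \<xi>"
    unfolding grad_x_def inner_vec_def by (simp add: mult.commute)
  finally show ?thesis unfolding time_deriv_def .
qed

lemma dir_deriv_seq:
  fixes v :: "real \<Rightarrow> real^'n \<Rightarrow> real" and Dv0 :: "(real \<times> (real^'n)) \<Rightarrow>\<^sub>L real"
  assumes D: "((\<lambda>(t,x). v t x) has_derivative blinfun_apply Dv0) (at (t0, x0))"
    and s: "\<And>k. s k \<noteq> 0" "s \<longlonglongrightarrow> 0"
  shows "(\<lambda>k. (v (t0 - s k) (x0 - s k *\<^sub>R \<xi>) - v t0 x0) / s k) \<longlonglongrightarrow> - blinfun_apply Dv0 (1, \<xi>)"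
proof -
  define \<gamma> where "\<gamma> h = (t0, x0) + h *\<^sub>R (-1::real, -\<xi>)" for h :: real
  have \<gamma>d: "(\<gamma> has_derivative (\<lambda>h. h *\<^sub>R (-1::real, -\<xi>))) (at 0)"
    unfolding \<gamma>_def by (intro derivative_eq_intros) auto
  have \<gamma>0: "\<gamma> 0 = (t0, x0)" by (simp add: \<gamma>_def)
  have der: "((\<lambda>h. (\<lambda>(t,x). v t x) (\<gamma> h)) has_derivative (\<lambda>h. blinfun_apply Dv0 (h *\<^sub>R (-1::real, -\<xi>)))) (at 0)"
    by (rule has_derivative_compose[OF \<gamma>d]) (use D \<gamma>0 in simp)
  have eqf: "(\<lambda>h. blinfun_apply Dv0 (h *\<^sub>R (-1::real, -\<xi>))) = (*) (- blinfun_apply Dv0 (1, \<xi>))"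
  proof
    fix h
    have "(-1::real, -\<xi>) = - (1, \<xi>)" by simp
    then have "blinfun_apply Dv0 (h *\<^sub>R (-1::real, -\<xi>)) = h *\<^sub>R (- blinfun_apply Dv0 (1, \<xi>))"
      by (simp only: blinfun.scaleR_right blinfun.minus_right)
    then show "blinfun_apply Dv0 (h *\<^sub>R (-1::real, -\<xi>)) = (- blinfun_apply Dv0 (1, \<xi>)) * h"
      by (simp add: real_scaleR_def mult.commute)
  qed
  have "((\<lambda>h. (\<lambda>(t,x). v t x) (\<gamma> h)) has_field_derivative (- blinfun_apply Dv0 (1, \<xi>))) (at 0)"
    unfolding has_field_derivative_def using der[unfolded eqf] .
  then have lim: "((\<lambda>y. ((\<lambda>(t,x). v t x) (\<gamma> y) - (\<lambda>(t,x). v t x) (\<gamma> 0)) / (y - 0)) \<longlongrightarrow> - blinfun_apply Dv0 (1, \<xi>)) (at 0)"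
    by (simp only: has_field_derivative_iff)
  have sat: "filterlim s (at 0) sequentially"
    using s by (simp add: filterlim_at)
  have "((\<lambda>k. ((\<lambda>(t,x). v t x) (\<gamma> (s k)) - (\<lambda>(t,x). v t x) (\<gamma> 0)) / (s k - 0)) \<longlongrightarrow> - blinfun_apply Dv0 (1, \<xi>)) sequentially"
    by (rule filterlim_compose[OF lim sat])
  moreover have "\<gamma> (s k) = (t0 - s k, x0 - s k *\<^sub>R \<xi>)" for k by (simp add: \<gamma>_def)
  ultimately show ?thesis using \<gamma>0 by simp
qed

lemma sign_lemma:
  fixes \<phi> :: "real \<Rightarrow> real"
  assumes c: "continuous_on {a..b} \<phi>" and ab: "a < b" and i: "integral {a..b} \<phi> \<le> 0"
    and sg: "(\<forall>\<tau>\<in>{a..b}. \<phi> \<tau> \<ge> 0) \<or> (\<forall>\<tau>\<in>{a..b}. \<phi> \<tau> \<le> 0)"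
  shows "\<phi> b \<le> 0"
  using sg
proof
  assume pos: "\<forall>\<tau>\<in>{a..b}. \<phi> \<tau> \<ge> 0"
  have int: "\<phi> integrable_on {a..b}" by (rule integrable_continuous_interval[OF c])
  have "0 \<le> integral {a..b} \<phi>" by (rule integral_nonneg[OF int]) (use pos in auto)
  with i have "integral {a..b} \<phi> = 0" by simp
  then have hi: "(\<phi> has_integral 0) (cbox a b)" using integrable_integral[OF int] by simp
  have "\<phi> b = 0"
    by (rule has_integral_0_cbox_imp_0[OF _ _ hi]) (use c pos ab in auto)
  then show ?thesis by simp
next
  assume "\<forall>\<tau>\<in>{a..b}. \<phi> \<tau> \<le> 0" then show ?thesis using ab by auto
qed




context hopf begin

lemma phi_sign:
  assumes S: "finite S" "S \<noteq> {}" and l: "\<forall>q\<in>S. l q \<ge> 0" "sum l S = 1" and p: "p = (\<Sum>q\<in>S. l q *\<^sub>R q)"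
  shows "(\<forall>\<tau>\<in>{t1..T}. (\<Sum>q\<in>S. l q * H \<tau> q) - H \<tau> p \<ge> 0) \<or> (\<forall>\<tau>\<in>{t1..T}. (\<Sum>q\<in>S. l q * H \<tau> q) - H \<tau> p \<le> 0)"
  using A2 unfolding cond_A2_def
proof (elim disjE exE)
  assume cv: "\<forall>t\<in>{t1..T}. convex_on UNIV (H t)"
  have "H \<tau> p \<le> (\<Sum>q\<in>S. l q * H \<tau> q)" if "\<tau> \<in> {t1..T}" for \<tau>
    unfolding p by (rule convex_on_sum[OF S cv[rule_format, OF that] l(2)]) (use l in auto)
  then show ?thesis by auto
next
  assume cv: "\<forall>t\<in>{t1..T}. concave_on UNIV (H t)"
  have "H \<tau> p \<ge> (\<Sum>q\<in>S. l q * H \<tau> q)" if "\<tau> \<in> {t1..T}" for \<tau>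
    unfolding p by (rule concave_on_sum[OF S cv[rule_format, OF that] l(2)]) (use l in auto)
  then show ?thesis by auto
next
  fix g h k assume gk: "(\<forall>t\<in>{t1..T}. \<forall>p. H t p = g t * h p + k t) \<and>
    ((\<forall>t\<in>{t1..T}. 0 \<le> g t) \<or> (\<forall>t\<in>{t1..T}. g t \<le> 0))"
  then have Hf: "\<forall>t\<in>{t1..T}. \<forall>p. H t p = g t * h p + k t"
    and gs: "(\<forall>t\<in>{t1..T}. 0 \<le> g t) \<or> (\<forall>t\<in>{t1..T}. g t \<le> 0)" by auto
  define c where "c = (\<Sum>q\<in>S. l q * h q) - h p"
  have phi: "(\<Sum>q\<in>S. l q * H \<tau> q) - H \<tau> p = g \<tau> * c" if \<tau>: "\<tau> \<in> {t1..T}" for \<tau>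
  proof -
    have e1: "(\<Sum>q\<in>S. l q * H \<tau> q) = (\<Sum>q\<in>S. g \<tau> * (l q * h q) + k \<tau> * l q)"
      by (rule sum.cong) (use Hf \<tau> in \<open>auto simp: algebra_simps\<close>)
    have e2: "(\<Sum>q\<in>S. g \<tau> * (l q * h q) + k \<tau> * l q) = g \<tau> * (\<Sum>q\<in>S. l q * h q) + k \<tau> * (\<Sum>q\<in>S. l q)"
      by (simp add: sum.distrib sum_distrib_left)
    show ?thesis using e1 e2 l(2) Hf \<tau> unfolding c_def by (simp add: algebra_simps)
  qed
  show ?thesis
  proof (cases "c \<ge> 0")
    case True
    with gs show ?thesis using phi by (auto intro: mult_nonneg_nonneg mult_nonpos_nonneg)
  next
    case False
    then have "c \<le> 0" by simp
    with gs show ?thesis using phi by (auto intro: mult_nonneg_nonpos mult_nonpos_nonpos)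
  qed
qed

lemma jensen_star:
  assumes t0: "t0 \<in> {t1<..<T}" and S: "finite S" "S \<noteq> {}" "\<forall>q\<in>S. mx t0 x0 = \<Phi> t0 x0 q"
    and l: "\<forall>q\<in>S. l q \<ge> 0" "sum l S = 1" and p: "p = (\<Sum>q\<in>S. l q *\<^sub>R q)"
  shows "(\<Sum>q\<in>S. l q * H t0 q) \<le> H t0 p"
proof -
  have t0': "t0 \<in> {t1..T}" using t0 by auto
  define u0 where "u0 = u t0 x0"
  have "\<forall>q\<in>S. \<exists>c. fconj \<sigma> q = ereal c \<and> u0 = inner x0 q - c - G t0 q"
    using fconj_finite_at_max[OF _ t0'] S(3) unfolding u0_def by blast
  then obtain c where c: "\<And>q. q \<in> S \<Longrightarrow> fconj \<sigma> q = ereal (c q) \<and> u0 = inner x0 q - c q - G t0 q"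
    by metis
  have fc: "fconj \<sigma> p \<le> ereal (\<Sum>q\<in>S. l q * c q)"
    unfolding p using fconj_convex[where I=S and l=l and q="\<lambda>q. q" and c=c and f=\<sigma>] S l c by simp
  define m where "m = inner x0 p - G t0 p - (\<Sum>q\<in>S. l q * c q)"
  have "ereal m \<le> \<Phi> t0 x0 p" unfolding Phi_ge_iff m_def using fc by simp
  also have "\<dots> \<le> mx t0 x0" by (rule Phi_le_mx)
  also have "\<dots> = ereal u0" using attain(2)[OF t0'] unfolding u0_def by simp
  finally have mu: "m \<le> u0" by simp
  have "(\<Sum>q\<in>S. l q * c q) = (\<Sum>q\<in>S. l q * inner x0 q - l q * G t0 q - l q * u0)"
  proof (rule sum.cong)
    fix q assume q: "q \<in> S"
    have cq: "c q = inner x0 q - G t0 q - u0" using c[OF q] by simp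
    show "l q * c q = l q * inner x0 q - l q * G t0 q - l q * u0" by (simp only: cq right_diff_distrib)
  qed simp
  also have "\<dots> = (\<Sum>q\<in>S. l q * inner x0 q) - (\<Sum>q\<in>S. l q * G t0 q) - (\<Sum>q\<in>S. l q * u0)"
    by (simp add: sum_subtractf)
  also have "(\<Sum>q\<in>S. l q * inner x0 q) = inner x0 p"
    unfolding p by (simp add: inner_sum_right)
  also have "(\<Sum>q\<in>S. l q * u0) = u0"
    by (subst sum_distrib_right[symmetric]) (simp add: l(2))
  finally have sc: "(\<Sum>q\<in>S. l q * c q) = inner x0 p - (\<Sum>q\<in>S. l q * G t0 q) - u0" .
  have Gineq: "(\<Sum>q\<in>S. l q * G t0 q) \<le> G t0 p" using mu sc unfolding m_def by linarith
  define \<phi> where "\<phi> \<tau> = (\<Sum>q\<in>S. l q * H \<tau> q) - H \<tau> p" for \<tau>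
  have sub: "{t1..t0} \<subseteq> {t1..T}" using t0 by auto
  have cont: "continuous_on {t1..t0} \<phi>"
    unfolding \<phi>_def
    by (intro continuous_on_diff continuous_on_sum continuous_on_mult continuous_on_const
        continuous_on_subset[OF H_cont_t sub])
  have ints: "(\<lambda>\<tau>. H \<tau> q) integrable_on {t1..t0}" for q by (rule H_int[OF sub])
  have ints2: "(\<lambda>\<tau>. l q * H \<tau> q) integrable_on {t1..t0}" for q
    by (rule integrable_continuous_interval)
       (intro continuous_on_mult continuous_on_const continuous_on_subset[OF H_cont_t sub])
  have "integral {t1..t0} \<phi> = integral {t1..t0} (\<lambda>\<tau>. \<Sum>q\<in>S. l q * H \<tau> q) - integral {t1..t0} (\<lambda>\<tau>. H \<tau> p)"
    unfolding \<phi>_def by (rule integral_diff) (auto intro!: integrable_sum ints2 ints S(1))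
  also have "integral {t1..t0} (\<lambda>\<tau>. \<Sum>q\<in>S. l q * H \<tau> q) = (\<Sum>q\<in>S. l q * G t0 q)"
    unfolding G_def by (subst integral_sum) (auto intro!: ints2 S(1))
  finally have "integral {t1..t0} \<phi> \<le> 0" using Gineq unfolding G_def by simp
  moreover have "(\<forall>\<tau>\<in>{t1..t0}. \<phi> \<tau> \<ge> 0) \<or> (\<forall>\<tau>\<in>{t1..t0}. \<phi> \<tau> \<le> 0)"
    using phi_sign[OF S(1,2) l p] sub unfolding \<phi>_def by blast
  ultimately have "\<phi> t0 \<le> 0" using sign_lemma[OF cont] t0 by auto
  then show ?thesis unfolding \<phi>_def by simp
qed

end



context hopf begin

lemma K1:
  assumes t0: "t0 \<in> {t1<..<T}"
    and D: "((\<lambda>(t,x). v t x) has_derivative blinfun_apply Dv0) (at (t0, x0))"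
    and lm: "\<exists>e>0. \<forall>t x. dist (t,x) (t0,x0) < e \<longrightarrow> u t x - v t x \<ge> u t0 x0 - v t0 x0"
  shows "\<exists>q. mx t0 x0 = \<Phi> t0 x0 q \<and> inner \<xi> (q - grad_x Dv0) - H t0 q \<le> time_deriv Dv0"
proof -
  have t0': "t0 \<in> {t1..T}" using t0 by auto
  obtain r N where rN: "r > 0" "N > 0" "\<forall>t\<in>{t1..T}. \<forall>x. \<bar>t - t0\<bar> + norm (x - x0) < r \<longrightarrow>
           (\<forall>q. mx t x = \<Phi> t x q \<longrightarrow> norm q \<le> N)"
    using attain_loc[OF t0', of x0] by blast
  obtain e where e: "e > 0" "\<forall>t x. dist (t,x) (t0,x0) < e \<longrightarrow> u t x - v t x \<ge> u t0 x0 - v t0 x0"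
    using lm by blast
  define n\<xi> where "n\<xi> = 1 + norm \<xi>"
  have n\<xi>: "n\<xi> > 0" "n\<xi> \<ge> 1" unfolding n\<xi>_def by (simp_all add: add_pos_nonneg)
  define \<delta> where "\<delta> = min ((t0 - t1)/2) (min (e/(2*n\<xi>)) (r/(2*n\<xi>)))"
  have \<delta>: "\<delta> > 0" unfolding \<delta>_def using t0 e rN n\<xi> by auto
  define s where "s k = \<delta> * inverse (real (Suc k))" for k
  have s_pos: "s k > 0" for k unfolding s_def using \<delta> by simp
  have s_le: "s k \<le> \<delta>" for k
  proof -
    have "inverse (real (Suc k)) \<le> 1" by (simp add: inverse_le_1_iff)
    then show ?thesis unfolding s_def using \<delta> mult_left_mono[of "inverse (real (Suc k))" 1 \<delta>] by simp
  qed
  have s_lim: "s \<longlonglongrightarrow> 0" unfolding s_def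
    using tendsto_mult[OF tendsto_const LIMSEQ_inverse_real_of_nat, of \<delta>] by simp
  define zt where "zt k = t0 - s k" for k
  define zx where "zx k = x0 - s k *\<^sub>R \<xi>" for k
  have zt_in: "zt k \<in> {t1..T}" for k
    using s_le[of k] s_pos[of k] t0 unfolding zt_def \<delta>_def by auto
  have zt_t1: "t0 - s k \<ge> t1" for k using zt_in[of k] unfolding zt_def by simp
  have dsum: "\<bar>zt k - t0\<bar> + norm (zx k - x0) = s k * n\<xi>" for k
    unfolding zt_def zx_def n\<xi>_def using s_pos[of k] by (simp add: algebra_simps)
  have sn: "s k * n\<xi> \<le> \<delta> * n\<xi>" for k using s_le[of k] n\<xi> by (simp add: mult_right_mono)
  have near: "\<bar>zt k - t0\<bar> + norm (zx k - x0) < r" for k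
  proof -
    have "\<delta> * n\<xi> \<le> r/(2*n\<xi>) * n\<xi>" unfolding \<delta>_def using n\<xi> by (intro mult_right_mono) auto
    also have "\<dots> = r/2" using n\<xi> by simp
    finally show ?thesis using dsum[of k] sn[of k] rN(1) by linarith
  qed
  have close: "dist (zt k, zx k) (t0, x0) < e" for k
  proof -
    have "dist (zt k, zx k) (t0, x0) \<le> dist (zt k) t0 + dist (zx k) x0"
      using sqrt_sum_squares_le_sum_abs[of "dist (zt k) t0" "dist (zx k) x0"] by (simp add: dist_Pair_Pair)
    also have "\<dots> = s k * n\<xi>" using dsum[of k] by (simp add: dist_real_def dist_norm)
    also have "\<dots> \<le> \<delta> * n\<xi>" by (rule sn)
    also have "\<dots> \<le> e/(2*n\<xi>) * n\<xi>" unfolding \<delta>_def using n\<xi> by (intro mult_right_mono) auto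
    also have "\<dots> = e/2" using n\<xi> by simp
    finally show ?thesis using e(1) by linarith
  qed
  have "\<forall>k. \<exists>q. mx (zt k) (zx k) = \<Phi> (zt k) (zx k) q" using attain(1)[OF zt_in] by blast
  then obtain qs where qs: "\<And>k. mx (zt k) (zx k) = \<Phi> (zt k) (zx k) (qs k)" by metis
  have qsb: "qs k \<in> cball 0 N" for k
    using rN(3)[rule_format, OF zt_in[of k] near[of k] qs[of k]] by (simp add: mem_cball_0)
  define u0 where "u0 = u t0 x0"
  have mx0: "mx t0 x0 = ereal u0" using attain(2)[OF t0'] unfolding u0_def by simp
  have ineq: "(v (t0 - s k) (x0 - s k *\<^sub>R \<xi>) - v t0 x0) / s k
      \<le> - inner \<xi> (qs k) + (G t0 (qs k) - G (t0 - s k) (qs k)) / s k" for k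
  proof -
    obtain c where c: "fconj \<sigma> (qs k) = ereal c" "u (zt k) (zx k) = inner (zx k) (qs k) - c - G (zt k) (qs k)"
      using fconj_finite_at_max[OF qs[of k] zt_in[of k]] by blast
    have "ereal (inner x0 (qs k) - c - G t0 (qs k)) = \<Phi> t0 x0 (qs k)" using Phi_real[OF c(1)] by simp
    also have "\<dots> \<le> mx t0 x0" by (rule Phi_le_mx)
    finally have u0ge: "inner x0 (qs k) - c - G t0 (qs k) \<le> u0" using mx0 by simp
    have vm: "v (zt k) (zx k) - v t0 x0 \<le> u (zt k) (zx k) - u0" using e(2) close[of k] unfolding u0_def by fastforce
    have "inner (zx k) (qs k) - inner x0 (qs k) = - (s k * inner \<xi> (qs k))"
      unfolding zx_def by (simp add: inner_diff_left)
    then have "v (zt k) (zx k) - v t0 x0 \<le> s k * (- inner \<xi> (qs k)) + (G t0 (qs k) - G (zt k) (qs k))"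
      using vm c(2) u0ge by (simp add: algebra_simps)
    then have "(v (zt k) (zx k) - v t0 x0) / s k \<le> (s k * (- inner \<xi> (qs k)) + (G t0 (qs k) - G (zt k) (qs k))) / s k"
      using s_pos[of k] by (intro divide_right_mono) auto
    also have "\<dots> = - inner \<xi> (qs k) + (G t0 (qs k) - G (zt k) (qs k)) / s k"
    proof -
      have "s k \<noteq> 0" using s_pos[of k] by simp
      then show ?thesis by (simp add: add_divide_distrib diff_divide_distrib)
    qed
    finally show ?thesis unfolding zt_def zx_def .
  qed
  obtain l \<rho> where l: "l \<in> cball 0 N" "strict_mono \<rho>" "(qs \<circ> \<rho>) \<longlonglongrightarrow> l"
    using seq_compactE[OF compact_imp_seq_compact[OF compact_cball]] qsb by metis
  have sr_lim: "(s \<circ> \<rho>) \<longlonglongrightarrow> 0" by (rule LIMSEQ_subseq_LIMSEQ[OF s_lim l(2)])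
  have lhs: "(\<lambda>k. (v (t0 - (s \<circ> \<rho>) k) (x0 - (s \<circ> \<rho>) k *\<^sub>R \<xi>) - v t0 x0) / (s \<circ> \<rho>) k)
      \<longlonglongrightarrow> - blinfun_apply Dv0 (1, \<xi>)"
    by (rule dir_deriv_seq[OF D _ sr_lim]) (use s_pos in \<open>simp add: less_imp_neq[symmetric]\<close>)
  have gdq: "(\<lambda>k. (G t0 ((qs \<circ> \<rho>) k) - G (t0 - (s \<circ> \<rho>) k) ((qs \<circ> \<rho>) k)) / (s \<circ> \<rho>) k) \<longlonglongrightarrow> H t0 l"
    by (rule G_dq[OF _ _ _ sr_lim l(3)]) (use t0 s_pos zt_t1 in auto)
  have rhs: "(\<lambda>k. - inner \<xi> ((qs \<circ> \<rho>) k) + (G t0 ((qs \<circ> \<rho>) k) - G (t0 - (s \<circ> \<rho>) k) ((qs \<circ> \<rho>) k)) / (s \<circ> \<rho>) k)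
      \<longlonglongrightarrow> - inner \<xi> l + H t0 l"
    by (intro tendsto_add tendsto_minus tendsto_inner tendsto_const l(3) gdq)
  have "- blinfun_apply Dv0 (1, \<xi>) \<le> - inner \<xi> l + H t0 l"
    by (rule LIMSEQ_le[OF lhs rhs]) (use ineq in auto)
  then have ineq_l: "inner \<xi> (l - grad_x Dv0) - H t0 l \<le> time_deriv Dv0"
    using Dlin[of Dv0 1 \<xi>] by (simp add: inner_diff_right inner_commute)
  have ztl: "(zt \<circ> \<rho>) \<longlonglongrightarrow> t0"
    using tendsto_diff[OF tendsto_const sr_lim, of t0] unfolding zt_def by (simp add: o_def)
  have zxl: "(zx \<circ> \<rho>) \<longlonglongrightarrow> x0"
    using tendsto_diff[OF tendsto_const tendsto_scaleR[OF sr_lim tendsto_const], of x0 \<xi>]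
    unfolding zx_def by (simp add: o_def)
  have "ereal u0 \<le> \<Phi> t0 x0 l"
  proof (rule Phi_usc[where tk="zt \<circ> \<rho>" and xk="zx \<circ> \<rho>" and qk="qs \<circ> \<rho>"
        and m="\<lambda>k. u (zt (\<rho> k)) (zx (\<rho> k))"])
    show "(\<lambda>k. u (zt (\<rho> k)) (zx (\<rho> k))) \<longlonglongrightarrow> u0"
      unfolding u0_def using u_cont_seq[OF _ t0' ztl zxl] zt_in by (simp add: o_def)
    fix k show "ereal (u (zt (\<rho> k)) (zx (\<rho> k))) \<le> \<Phi> ((zt \<circ> \<rho>) k) ((zx \<circ> \<rho>) k) ((qs \<circ> \<rho>) k)"
      using qs[of "\<rho> k"] attain(2)[OF zt_in[of "\<rho> k"]] by simp
  qed (use zt_in t0' ztl zxl l in auto)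
  moreover have "\<Phi> t0 x0 l \<le> mx t0 x0" by (rule Phi_le_mx)
  ultimately have "mx t0 x0 = \<Phi> t0 x0 l" using mx0 by simp
  then show ?thesis using ineq_l by blast
qed

end



context hopf begin

lemma supersol:
  assumes t0: "t0 \<in> {t1<..<T}"
    and D: "((\<lambda>(t,x). v t x) has_derivative blinfun_apply Dv0) (at (t0, x0))"
    and lm: "\<exists>e>0. \<forall>t x. dist (t,x) (t0,x0) < e \<longrightarrow> u t x - v t x \<ge> u t0 x0 - v t0 x0"
  shows "time_deriv Dv0 + H t0 (grad_x Dv0) \<ge> 0"
proof -
  have t0': "t0 \<in> {t1..T}" using t0 by auto
  define a where "a = time_deriv Dv0"
  define p where "p = grad_x Dv0"
  define Q0 where "Q0 = {q. mx t0 x0 = \<Phi> t0 x0 q}"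
  have K1': "\<exists>q\<in>Q0. inner \<xi> (q - p) - H t0 q \<le> a" for \<xi>
    using K1[OF t0 D lm, of \<xi>] unfolding Q0_def a_def p_def by blast
  obtain r N where rN: "r > 0" "N > 0" "\<forall>t\<in>{t1..T}. \<forall>x. \<bar>t - t0\<bar> + norm (x - x0) < r \<longrightarrow>
           (\<forall>q. mx t x = \<Phi> t x q \<longrightarrow> norm q \<le> N)"
    using attain_loc[OF t0', of x0] by blast
  have Q0N: "Q0 \<subseteq> cball 0 N" using rN(1) rN(3)[rule_format, OF t0', of x0] unfolding Q0_def by auto
  define u0 where "u0 = u t0 x0"
  have mx0: "mx t0 x0 = ereal u0" using attain(2)[OF t0'] unfolding u0_def by simp
  have Q0closed: "closed Q0"
    unfolding closed_sequential_limits
  proof (intro allI impI, elim conjE)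
    fix qn l assume qn: "\<forall>n. qn n \<in> Q0" and lim: "qn \<longlonglongrightarrow> l"
    have "ereal u0 \<le> \<Phi> t0 x0 l"
      by (rule Phi_usc[where tk="\<lambda>_. t0" and xk="\<lambda>_. x0" and qk=qn and m="\<lambda>_. u0"])
         (use qn mx0 t0' lim in \<open>auto simp: Q0_def\<close>)
    moreover have "\<Phi> t0 x0 l \<le> mx t0 x0" by (rule Phi_le_mx)
    ultimately show "l \<in> Q0" unfolding Q0_def using mx0 by simp
  qed
  have Q0compact: "compact Q0"
    unfolding compact_eq_bounded_closed using Q0closed bounded_subset[OF bounded_cball Q0N] by blast
  obtain q00 where q00: "q00 \<in> Q0" using attain(1)[OF t0'] unfolding Q0_def by blast
  obtain B where B: "B \<ge> 0" "\<forall>\<tau>\<in>{t1..T}. \<forall>q\<in>cball 0 N. \<bar>H \<tau> q\<bar> \<le> B" using H_bound[of N] by blast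
  have HB: "q \<in> Q0 \<Longrightarrow> \<bar>H t0 q\<bar> \<le> B" for q using B(2) t0' Q0N by blast
  define f where "f q = (q - p, - H t0 q)" for q
  have fcont: "continuous_on Q0 f"
    unfolding f_def
    by (rule continuous_on_Pair[OF continuous_on_diff[OF continuous_on_id continuous_on_const]
          continuous_on_minus[OF continuous_on_subset[OF H_cont_q[OF t0'] subset_UNIV]]])
  define P where "P = f ` Q0"
  have Pc: "compact P" unfolding P_def by (rule compact_continuous_image[OF fcont Q0compact])
  define Kc where "Kc = convex hull P"
  have Kcc: "compact Kc" unfolding Kc_def by (rule compact_convex_hull[OF Pc])
  define R where "R = {0::real^'n} \<times> {0::real..}"
  have Rcl: "closed R" unfolding R_def by (intro closed_Times closed_singleton closed_atLeast)
  have Rcv: "convex R" unfolding R_def by (intro convex_Times convex_singleton convex_real_interval)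
  define C where "C = (\<Union>x\<in>Kc. \<Union>y\<in>R. {x + y})"
  have Ccl: "closed C" unfolding C_def by (rule compact_closed_sums[OF Kcc Rcl])
  have Ccv: "convex C" unfolding C_def Kc_def by (rule convex_sums[OF convex_convex_hull Rcv])
  have inC: "f q + (0, \<rho>) \<in> C" if "q \<in> Q0" "\<rho> \<ge> 0" for q \<rho>
  proof -
    have "f q \<in> P" unfolding P_def using that(1) by (rule imageI)
    moreover have "P \<subseteq> Kc" unfolding Kc_def by (rule hull_subset)
    ultimately have "f q \<in> Kc" by blast
    moreover have "(0, \<rho>) \<in> R" unfolding R_def using that by simp
    ultimately show ?thesis unfolding C_def by blast
  qed
  have aC: "(0, a) \<in> C"
  proof (rule ccontr)
    assume nC: "(0, a) \<notin> C"
    obtain w b where wb: "inner w (0, a) < b" "\<forall>z\<in>C. inner w z > b"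
      using separating_hyperplane_closed_point[OF Ccv Ccl nC] by blast
    obtain \<xi>' \<beta> where w: "w = (\<xi>', \<beta>)" by (cases w)
    have key: "b < inner \<xi>' (q - p) + \<beta> * (\<rho> - H t0 q)" if "q \<in> Q0" "\<rho> \<ge> 0" for q \<rho>
    proof -
      have "b < inner w (f q + (0, \<rho>))" using wb(2) inC[OF that] by blast
      then show ?thesis unfolding w f_def by (simp add: inner_Pair algebra_simps)
    qed
    have wa: "\<beta> * a < b" using wb(1) unfolding w by (simp add: inner_Pair)
    consider "\<beta> < 0" | "\<beta> = 0" | "\<beta> > 0" by linarith
    then show False
    proof cases
      case 1
      define A where "A = inner \<xi>' (q00 - p) - \<beta> * H t0 q00"
      show False
      proof (cases "A \<le> b")
        case True
        then show False using key[OF q00, of 0] unfolding A_def by simp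
      next
        case False
        define \<rho> where "\<rho> = (A - b) / (- \<beta>)"
        have \<rho>: "\<rho> \<ge> 0" unfolding \<rho>_def using False 1 by (intro divide_nonneg_pos) auto
        have "\<beta> * \<rho> = b - A" unfolding \<rho>_def using 1 by (simp add: field_simps)
        then show False using key[OF q00 \<rho>] unfolding A_def by (simp add: algebra_simps)
      qed
    next
      case 2
      then have b0: "b > 0" using wa by simp
      define Rr where "Rr = (\<bar>a\<bar> + B + 1) / b"
      have Rr: "Rr > 0" unfolding Rr_def using b0 B(1) by simp
      obtain q where q: "q \<in> Q0" "inner (Rr *\<^sub>R \<xi>') (q - p) - H t0 q \<le> a" using K1'[of "Rr *\<^sub>R \<xi>'"] by blast
      have "b < inner \<xi>' (q - p)" using key[OF q(1), of 0] 2 by simp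
      then have "Rr * b < Rr * inner \<xi>' (q - p)" using Rr by simp
      moreover have "Rr * b = \<bar>a\<bar> + B + 1" unfolding Rr_def using b0 by simp
      moreover have "H t0 q \<le> B" using HB[OF q(1)] by simp
      ultimately show False using q(2) by simp
    next
      case 3
      obtain q where q: "q \<in> Q0" "inner ((1/\<beta>) *\<^sub>R \<xi>') (q - p) - H t0 q \<le> a"
        using K1'[of "(1/\<beta>) *\<^sub>R \<xi>'"] by blast
      have "b < inner \<xi>' (q - p) - \<beta> * H t0 q" using key[OF q(1), of 0] by simp
      moreover have "inner \<xi>' (q - p) - \<beta> * H t0 q = \<beta> * (inner ((1/\<beta>) *\<^sub>R \<xi>') (q - p) - H t0 q)"
        using 3 by (simp add: algebra_simps)
      moreover have "\<beta> * (inner ((1/\<beta>) *\<^sub>R \<xi>') (q - p) - H t0 q) \<le> \<beta> * a"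
        using q(2) 3 by (simp add: mult_left_mono)
      ultimately show False using wa by simp
    qed
  qed
  then obtain k y where ky: "k \<in> Kc" "y \<in> R" "(0, a) = k + y" unfolding C_def by blast
  obtain \<rho> where \<rho>: "y = (0, \<rho>)" "\<rho> \<ge> 0" using ky(2) unfolding R_def by auto
  have kk: "k = (0, a - \<rho>)" using ky(3) \<rho>(1) by (simp add: prod_eq_iff)
  obtain S w where Sw: "finite S" "S \<subseteq> P" "\<forall>x\<in>S. 0 \<le> w x" "sum w S = 1" "(\<Sum>v\<in>S. w v *\<^sub>R v) = k"
    using ky(1) unfolding Kc_def convex_hull_explicit by blast
  have injf: "inj_on f Q0" unfolding inj_on_def f_def by auto
  define Tq where "Tq = {q \<in> Q0. f q \<in> S}"
  have STq: "S = f ` Tq" using Sw(2) unfolding Tq_def P_def by blast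
  have injT: "inj_on f Tq" using injf unfolding Tq_def by (rule inj_on_subset) auto
  have Tfin: "finite Tq" using Sw(1) STq injT finite_image_iff by blast
  define l where "l q = w (f q)" for q
  have lsum: "sum l Tq = 1" unfolding l_def using Sw(4) STq sum.reindex[OF injT, of w] by (simp add: o_def)
  have lnn: "\<forall>q\<in>Tq. l q \<ge> 0" unfolding l_def using Sw(3) STq by blast
  have lk: "(\<Sum>q\<in>Tq. l q *\<^sub>R f q) = k"
    unfolding l_def using Sw(5) STq sum.reindex[OF injT, of "\<lambda>v. w v *\<^sub>R v"] by (simp add: o_def)
  have Tne: "Tq \<noteq> {}" using lsum by auto
  have "fst (\<Sum>q\<in>Tq. l q *\<^sub>R f q) = 0" using lk kk by simp
  then have "(\<Sum>q\<in>Tq. l q *\<^sub>R (q - p)) = 0" by (simp add: fst_sum f_def)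
  then have "(\<Sum>q\<in>Tq. l q *\<^sub>R q) - (\<Sum>q\<in>Tq. l q) *\<^sub>R p = 0"
    by (simp add: scaleR_diff_right sum_subtractf scaleR_sum_left)
  then have pe: "p = (\<Sum>q\<in>Tq. l q *\<^sub>R q)" using lsum by simp
  have "snd (\<Sum>q\<in>Tq. l q *\<^sub>R f q) = a - \<rho>" using lk kk by simp
  then have "(\<Sum>q\<in>Tq. l q * (- H t0 q)) = a - \<rho>" by (simp add: snd_sum f_def)
  then have sH: "(\<Sum>q\<in>Tq. l q * H t0 q) = \<rho> - a" by (simp add: sum_negf)
  have TQ: "\<forall>q\<in>Tq. mx t0 x0 = \<Phi> t0 x0 q" unfolding Tq_def Q0_def by blast
  have "(\<Sum>q\<in>Tq. l q * H t0 q) \<le> H t0 p"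
    by (rule jensen_star[OF t0 Tfin Tne TQ lnn lsum pe])
  then show ?thesis using sH \<rho>(2) unfolding a_def p_def by simp
qed

end



theorem proposition3p2:
  fixes \<sigma> :: "real^'n \<Rightarrow> real"
    and H :: "real \<Rightarrow> real^'n \<Rightarrow> real"
    and t1 T :: real
  assumes "0 < t1" and "t1 < T"
    and "convex_on UNIV \<sigma>"
    and "\<exists>DH. (\<forall>z\<in>{t1..T} \<times> UNIV.
                 ((\<lambda>(t,p). H t p) has_derivative blinfun_apply (DH z)) (at z within {t1..T} \<times> UNIV))
             \<and> continuous_on ({t1..T} \<times> UNIV) DH"
    and "cond_A1 \<sigma> H t1 T"
    and "cond_A2 H t1 T"
  shows "\<exists>u :: real \<Rightarrow> real^'n \<Rightarrow> real.
           (\<forall>t\<in>{t1..T}. \<forall>x.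
              ereal (u t x) = (SUP q. ereal (inner x q) - fconj \<sigma> q
                                      - ereal (integral {t1..t} (\<lambda>\<tau>. H \<tau> q))) \<and>
              (\<exists>q. ereal (u t x) = ereal (inner x q) - fconj \<sigma> q
                                      - ereal (integral {t1..t} (\<lambda>\<tau>. H \<tau> q)))) \<and>
           viscosity_solution H t1 T \<sigma> u"
proof -
  obtain DH where DH: "\<forall>z\<in>{t1..T} \<times> UNIV.
                 ((\<lambda>(t,p). H t p) has_derivative blinfun_apply (DH z)) (at z within {t1..T} \<times> UNIV)"
    using assms(4) by blast
  have Hc: "continuous_on ({t1..T} \<times> UNIV) (\<lambda>(t,p). H t p)"
    unfolding continuous_on_eq_continuous_within
    using DH has_derivative_continuous by blast
  interpret hp: hopf \<sigma> H t1 T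
    by unfold_locales (use assms Hc in auto)
  define U where "U = hp.u"
  have part1: "\<forall>t\<in>{t1..T}. \<forall>x.
              ereal (U t x) = (SUP q. ereal (inner x q) - fconj \<sigma> q
                                      - ereal (integral {t1..t} (\<lambda>\<tau>. H \<tau> q))) \<and>
              (\<exists>q. ereal (U t x) = ereal (inner x q) - fconj \<sigma> q
                                      - ereal (integral {t1..t} (\<lambda>\<tau>. H \<tau> q)))"
  proof (intro ballI allI conjI)
    fix t x assume t: "t \<in> {t1..T}"
    show "ereal (U t x) = (SUP q. ereal (inner x q) - fconj \<sigma> q - ereal (integral {t1..t} (\<lambda>\<tau>. H \<tau> q)))"
      using hp.attain(2)[OF t, of x] unfolding U_def hp.mx_def hp.\<Phi>_def hp.G_def by simp
    obtain q where q: "hp.mx t x = hp.\<Phi> t x q" using hp.attain(1)[OF t] by blast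
    show "\<exists>q. ereal (U t x) = ereal (inner x q) - fconj \<sigma> q - ereal (integral {t1..t} (\<lambda>\<tau>. H \<tau> q))"
      using q hp.attain(2)[OF t, of x] unfolding U_def hp.\<Phi>_def hp.G_def by (intro exI[of _ q]) simp
  qed
  have part2: "viscosity_solution H t1 T \<sigma> U"
    unfolding viscosity_solution_def
  proof (intro conjI allI impI ballI)
    show "continuous_on ({t1..T} \<times> UNIV) (\<lambda>(t,x). U t x)" unfolding U_def by (rule hp.u_cont)
    fix x show "U t1 x = \<sigma> x" unfolding U_def by (rule hp.u_init)
  next
    fix v :: "real \<Rightarrow> real^'n \<Rightarrow> real" and Dv t0 x0
    assume C1: "(\<forall>z\<in>{t1<..<T} \<times> UNIV. ((\<lambda>(t,x). v t x) has_derivative blinfun_apply (Dv z)) (at z))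
        \<and> continuous_on ({t1<..<T} \<times> UNIV) Dv"
      and t0: "t0 \<in> {t1<..<T}"
    have D: "((\<lambda>(t,x). v t x) has_derivative blinfun_apply (Dv (t0, x0))) (at (t0, x0))"
      using C1 t0 by blast
    {
      assume "\<exists>e>0. \<forall>t x. dist (t, x) (t0, x0) < e \<longrightarrow> U t x - v t x \<le> U t0 x0 - v t0 x0"
      then show "time_deriv (Dv (t0, x0)) + H t0 (grad_x (Dv (t0, x0))) \<le> 0"
        unfolding U_def by (rule hp.subsol[OF t0 D])
    next
      assume "\<exists>e>0. \<forall>t x. dist (t, x) (t0, x0) < e \<longrightarrow> U t0 x0 - v t0 x0 \<le> U t x - v t x"
      then show "0 \<le> time_deriv (Dv (t0, x0)) + H t0 (grad_x (Dv (t0, x0)))"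
        unfolding U_def by (rule hp.supersol[OF t0 D])
    }
  qed
  show ?thesis using part1 part2 by blast
qed



end
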